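(* For all positive integers $k,t$, with $\mathcal{S}$ the support partition of $\mathbb{F}_q^k$, $$\frac{2^k q}{4^k(q-1)-a(q-a)}\sum_{s=1}^{\min(k,2t)}(2t+1-s)\binom{k}{s}\;\le\; r_{\mathcal{S}}(k,t)\;\le\; N_q(2^k,2t),$$ where $a=2^k\bmod q$.
   Context: $\mathcal{S}=\{S_A:A\subseteq[k]\}$ with $S_A=\{u\in\mathbb{F}_q^k:\mathrm{supp}(u)=A\}$, $\mathrm{supp}(u)=\{i:u_i\ne0\}$. A $(\mathcal{P},t)$-encoding with redundancy $r$ is a systematic map $\mathcal{C}:\mathbb{F}_q^k\to\mathbb{F}_q^{k+r}$, $\mathcal{C}(u)=(u,p(u))$, with Hamming distance $d(\mathcal{C}(u),\mathcal{C}(v))\ge 2t+1$ whenever $u,v$ lie in different blocks of $\mathcal{P}$; $r_{\mathcal{P}}(k,t)$ is the minimum such $r$. $N_q(M,d)$ denotes the minimum length of a $q$-ary code with $M$ codewords and minimum Hamming distance $d$. *)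

theory Defs
  imports Complex_Main
begin

text \<open>Vectors of length n over the alphabet/field 'a are lists of length n (0-based coordinates).\<close>

definition vecs :: "nat \<Rightarrow> 'a list set" where
  "vecs n = {xs. length xs = n}"

definition hdist :: "'a list \<Rightarrow> 'a list \<Rightarrow> nat" where
  "hdist xs ys = card {i. i < length xs \<and> xs ! i \<noteq> ys ! i}"

definition supp :: "'a::zero list \<Rightarrow> nat set" where
  "supp u = {i. i < length u \<and> u ! i \<noteq> 0}"

definition support_partition :: "nat \<Rightarrow> 'a::zero list set set" where
  "support_partition k = {{u \<in> vecs k. supp u = A} | A. A \<subseteq> {0..<k}}"

text \<open>p gives a systematic (P,t)-encoding C(u) = (u, p(u)) with redundancy r.\<close>
definition is_encoding :: "'a list set set \<Rightarrow> nat \<Rightarrow> nat \<Rightarrow> nat \<Rightarrow> ('a list \<Rightarrow> 'a list) \<Rightarrow> bool" where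
  "is_encoding P k t r p \<longleftrightarrow>
     (\<forall>u \<in> vecs k. length (p u) = r) \<and>
     (\<forall>u \<in> vecs k. \<forall>v \<in> vecs k. (\<not> (\<exists>B \<in> P. u \<in> B \<and> v \<in> B)) \<longrightarrow>
         hdist (u @ p u) (v @ p v) \<ge> 2 * t + 1)"

definition min_redundancy :: "'a list set set \<Rightarrow> nat \<Rightarrow> nat \<Rightarrow> nat" where
  "min_redundancy P k t = (LEAST r. \<exists>p. is_encoding P k t r p)"

text \<open>N_q(M,d): minimum length of a code over alphabet 'a (q = CARD('a)) with M codewords
  and minimum Hamming distance d.\<close>
definition min_code_length :: "'a itself \<Rightarrow> nat \<Rightarrow> nat \<Rightarrow> nat" where
  "min_code_length _ M d = (LEAST n. \<exists>C :: 'a list set. C \<subseteq> vecs n \<and> card C = M \<and>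
      (\<forall>x \<in> C. \<forall>y \<in> C. x \<noteq> y \<longrightarrow> hdist x y \<ge> d))"

end

theory Submission
  imports Defs
begin

lemma hdist_sum: "hdist xs ys = (\<Sum>i<length xs. of_bool (xs!i \<noteq> ys!i))"
  unfolding hdist_def by (simp add: Int_def lessThan_def)

lemma sum_split_add: fixes n m :: nat shows "(\<Sum>i<n+m. (f i::nat)) = (\<Sum>i<n. f i) + (\<Sum>i<m. f (n+i))"
  by (induct m) (simp_all add: add.assoc)

lemma hdist_append:
  assumes "length xs = length ys"
  shows "hdist (xs @ xs') (ys @ ys') = hdist xs ys + hdist xs' ys'"
proof -
  let ?n = "length xs" and ?m = "length xs'"
  have "hdist (xs @ xs') (ys @ ys') = (\<Sum>i<?n + ?m. of_bool ((xs@xs')!i \<noteq> (ys@ys')!i))"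
    by (simp add: hdist_sum)
  also have "\<dots> = (\<Sum>i<?n. of_bool ((xs@xs')!i \<noteq> (ys@ys')!i)) + (\<Sum>i<?m. of_bool ((xs@xs')!(?n+i) \<noteq> (ys@ys')!(?n+i)))"
    by (rule sum_split_add)
  also have "\<dots> = hdist xs ys + hdist xs' ys'"
    using assms by (simp add: hdist_sum nth_append)
  finally show ?thesis .
qed

lemma hdist_pos:
  assumes "length u = length v" "u \<noteq> v"
  shows "hdist u v \<ge> 1"
proof -
  obtain i where "i < length u" "u!i \<noteq> v!i" using assms nth_equalityI by blast
  then have "{i. i < length u \<and> u ! i \<noteq> v ! i} \<noteq> {}" by blast
  then show ?thesis unfolding hdist_def
    by (simp add: Suc_leI card_gt_0_iff)
qed

lemma sq_ge_lin:
  fixes n m :: nat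
  shows "real n ^ 2 \<ge> (2 * real m + 1) * real n - real m * (real m + 1)"
proof -
  have "(real n - real m) * (real n - real m - 1) \<ge> 0"
  proof (cases "n \<le> m")
    case True then show ?thesis by (intro mult_nonpos_nonpos) auto
  next
    case False then show ?thesis by (intro mult_nonneg_nonneg) auto
  qed
  moreover have "(real n - real m) * (real n - real m - 1) = real n ^2 - ((2*real m+1)*real n - real m*(real m+1))"
    by (simp add: power2_eq_square algebra_simps)
  ultimately show ?thesis by linarith
qed

lemma column_bound:
  fixes f :: "'b \<Rightarrow> 'a::finite" and P :: "'b set"
  assumes "finite P"
  shows "real (card (UNIV :: 'a set)) * (\<Sum>A\<in>P. \<Sum>B\<in>P. of_bool (f A \<noteq> f B))
     \<le> real (card P) ^ 2 * (real (card (UNIV :: 'a set)) - 1)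
        - real (card P mod card (UNIV :: 'a set)) * (real (card (UNIV :: 'a set)) - real (card P mod card (UNIV :: 'a set)))"
proof -
  define M where "M = card P"
  define q where "q = card (UNIV :: 'a set)"
  define m where "m = M div q"
  define a where "a = M mod q"
  define n where "n x = card {A \<in> P. f A = x}" for x
  have Meq: "real M = real q * real m + real a"
  proof -
    have Mn: "M = q * m + a" unfolding m_def a_def by (rule mult_div_mod_eq[symmetric])
    show ?thesis by (simp add: Mn)
  qed
  have S1: "(\<Sum>x\<in>UNIV. real (n x)) = real M"
    using sum.group[of P UNIV f "\<lambda>_. (1::real)"] assms by (simp add: n_def M_def)
  have S2: "(\<Sum>A\<in>P. real (n (f A))) = (\<Sum>x\<in>UNIV. real (n x) ^ 2)"
  proof -
    have "(\<Sum>A\<in>P. real (n (f A))) = (\<Sum>x\<in>UNIV. \<Sum>A\<in>{A\<in>P. f A = x}. real (n (f A)))"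
      using sum.group[of P UNIV f "\<lambda>A. real (n (f A))"] assms by simp
    also have "\<dots> = (\<Sum>x\<in>UNIV. \<Sum>A\<in>{A\<in>P. f A = x}. real (n x))"
      by (intro sum.cong) auto
    also have "\<dots> = (\<Sum>x\<in>UNIV. real (n x) ^ 2)"
      by (simp add: n_def power2_eq_square)
    finally show ?thesis .
  qed
  have inner: "(\<Sum>B\<in>P. of_bool (f A \<noteq> f B)) = real M - real (n (f A))" if "A \<in> P" for A
  proof -
    have "P \<inter> {B. f A \<noteq> f B} = P - {B \<in> P. f B = f A}" by auto
    moreover have "card (P - {B \<in> P. f B = f A}) = M - n (f A)"
      using assms by (subst card_Diff_subset) (auto simp: M_def n_def)
    moreover have "n (f A) \<le> M" using assms unfolding n_def M_def by (intro card_mono) auto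
    ultimately show ?thesis using assms by (simp add: of_nat_diff)
  qed
  have L: "(\<Sum>A\<in>P. \<Sum>B\<in>P. of_bool (f A \<noteq> f B)) = real M * real M - (\<Sum>x\<in>UNIV. real (n x) ^ 2)"
    using inner S2 by (simp add: sum_subtractf M_def)
  have K: "(\<Sum>x\<in>UNIV. real (n x) ^ 2) \<ge> (\<Sum>x\<in>UNIV. (2 * real m + 1) * real (n x) - real m * (real m + 1))"
    by (intro sum_mono sq_ge_lin)
  also have "(\<Sum>x\<in>UNIV. (2 * real m + 1) * real (n x) - real m * (real m + 1)) = (2 * real m + 1) * real M - real q * real m * (real m + 1)"
    using S1 by (simp add: sum_subtractf sum_distrib_left[symmetric] q_def)
  finally have K2: "(\<Sum>x\<in>UNIV. real (n x) ^ 2) \<ge> (2 * real m + 1) * real M - real q * real m * (real m + 1)" .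
  have q0: "real q \<ge> 0" by simp
  have "real q * (\<Sum>A\<in>P. \<Sum>B\<in>P. of_bool (f A \<noteq> f B)) \<le> real q * (real M * real M - ((2 * real m + 1) * real M - real q * real m * (real m + 1)))"
    unfolding L using K2 q0 by (intro mult_left_mono) auto
  also have "\<dots> = real M ^ 2 * (real q - 1) - real a * (real q - real a)"
    unfolding Meq by algebra
  finally show ?thesis unfolding M_def q_def a_def .
qed

lemma pow_card_sum:
  fixes g :: "nat \<Rightarrow> real"
  shows "(\<Sum>C\<in>Pow {0..<k}. g (card C)) = (\<Sum>s=0..k. real (k choose s) * g s)"
proof -
  have "card ` Pow {0..<k} \<subseteq> {0..k}"
  proof
    fix x assume "x \<in> card ` Pow {0..<k}"
    then obtain C where "C \<subseteq> {0..<k}" "x = card C" by auto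
    then have "x \<le> card {0..<k}" by (metis card_mono finite_atLeastLessThan)
    then show "x \<in> {0..k}" by simp
  qed
  then have "(\<Sum>C\<in>Pow {0..<k}. g (card C)) = (\<Sum>s\<in>{0..k}. of_nat (card {C \<in> Pow {0..<k}. card C = s}) * g s)"
    by (intro sum_fun_comp) auto
  also have "\<dots> = (\<Sum>s=0..k. real (k choose s) * g s)"
  proof (intro sum.cong refl)
    fix s
    have "{C \<in> Pow {0..<k}. card C = s} = {C. C \<subseteq> {0..<k} \<and> card C = s}" by auto
    then show "of_nat (card {C \<in> Pow {0..<k}. card C = s}) * g s = real (k choose s) * g s"
      using n_subsets[of "{0..<k}" s] by simp
  qed
  finally show ?thesis .
qed

lemma pair_count:
  fixes g :: "nat \<Rightarrow> real"
  shows "(\<Sum>A\<in>Pow {0..<k}. \<Sum>B\<in>Pow {0..<k}. g (card ((A - B) \<union> (B - A))))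
       = 2 ^ k * (\<Sum>s=0..k. real (k choose s) * g s)"
proof -
  have "(\<Sum>B\<in>Pow {0..<k}. g (card ((A - B) \<union> (B - A)))) = (\<Sum>C\<in>Pow {0..<k}. g (card C))"
    if "A \<in> Pow {0..<k}" for A
    using that by (intro sum.reindex_bij_witness[where i="\<lambda>C. (A - C) \<union> (C - A)" and j="\<lambda>C. (A - C) \<union> (C - A)"]) auto
  then have "(\<Sum>A\<in>Pow {0..<k}. \<Sum>B\<in>Pow {0..<k}. g (card ((A - B) \<union> (B - A))))
      = (\<Sum>A\<in>Pow {0..<k}. \<Sum>C\<in>Pow {0..<k}. g (card C))" by simp
  also have "\<dots> = 2 ^ k * (\<Sum>s=0..k. real (k choose s) * g s)"
    by (simp add: pow_card_sum card_Pow)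
  finally show ?thesis .
qed

definition bvec :: "nat \<Rightarrow> nat set \<Rightarrow> 'a::zero_neq_one list" where
  "bvec k A = map (\<lambda>i. if i \<in> A then 1 else 0) [0..<k]"

lemma bvec_len [simp]: "length (bvec k A) = k"
  by (simp add: bvec_def)

lemma bvec_vecs: "bvec k A \<in> vecs k"
  by (simp add: vecs_def)

lemma supp_bvec: "A \<subseteq> {0..<k} \<Longrightarrow> supp (bvec k A :: 'a::zero_neq_one list) = A"
  unfolding supp_def bvec_def by (auto split: if_splits)

lemma hdist_bvec:
  assumes "A \<subseteq> {0..<k}" "B \<subseteq> {0..<k}"
  shows "hdist (bvec k A :: 'a::zero_neq_one list) (bvec k B) = card ((A - B) \<union> (B - A))"
proof -
  have "{i. i < length (bvec k A :: 'a list) \<and> (bvec k A :: 'a list) ! i \<noteq> bvec k B ! i} = (A - B) \<union> (B - A)"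
    using assms by (auto simp: bvec_def split: if_splits)
  then show ?thesis by (simp add: hdist_def)
qed

lemma not_same_block:
  assumes "A \<subseteq> {0..<k}" "B \<subseteq> {0..<k}" "A \<noteq> B"
  shows "\<not> (\<exists>Bl \<in> support_partition k. (bvec k A :: 'a::zero_neq_one list) \<in> Bl \<and> bvec k B \<in> Bl)"
proof
  assume "\<exists>Bl \<in> support_partition k. (bvec k A :: 'a::zero_neq_one list) \<in> Bl \<and> bvec k B \<in> Bl"
  then obtain A' where "(bvec k A :: 'a list) \<in> {u \<in> vecs k. supp u = A'}" "(bvec k B :: 'a list) \<in> {u \<in> vecs k. supp u = A'}"
    unfolding support_partition_def by blast
  then have "supp (bvec k A :: 'a list) = supp (bvec k B :: 'a list)" by simp
  then show False using assms supp_bvec by metis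
qed

lemma lower_core:
  fixes p :: "'a::{finite,field} list \<Rightarrow> 'a list"
  assumes enc: "is_encoding (support_partition k) k t r p"
  shows "real (card (UNIV :: 'a set)) * (2 ^ k * (\<Sum>s = 1..min k (2 * t). real (2 * t + 1 - s) * real (k choose s)))
     \<le> real r * (4 ^ k * (real (card (UNIV :: 'a set)) - 1)
        - real (2 ^ k mod card (UNIV :: 'a set)) * (real (card (UNIV :: 'a set)) - real (2 ^ k mod card (UNIV :: 'a set))))"
proof -
  define q where "q = card (UNIV :: 'a set)"
  define K where "K = {0..<k}"
  define w where "w A = p (bvec k A)" for A
  define g where "g s = (if 1 \<le> s \<and> s \<le> 2 * t then real (2 * t + 1 - s) else 0)" for s
  define D where "D = real (2 ^ k) ^ 2 * (real q - 1) - real (2 ^ k mod q) * (real q - real (2 ^ k mod q))"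
  have wlen: "length (w A) = r" for A
    using enc bvec_vecs unfolding is_encoding_def w_def by blast
  have gle: "g (card ((A - B) \<union> (B - A))) \<le> real (hdist (w A) (w B))" if "A \<in> Pow K" "B \<in> Pow K" for A B
  proof (cases "A = B")
    case True then show ?thesis by (simp add: g_def)
  next
    case False
    have AK: "A \<subseteq> {0..<k}" "B \<subseteq> {0..<k}" using that K_def by auto
    have "hdist ((bvec k A :: 'a list) @ w A) (bvec k B @ w B) \<ge> 2 * t + 1"
      using enc not_same_block[OF AK False, where 'a='a] bvec_vecs unfolding is_encoding_def w_def by blast
    then have "card ((A - B) \<union> (B - A)) + hdist (w A) (w B) \<ge> 2 * t + 1"
      by (simp add: hdist_append hdist_bvec[OF AK])
    then show ?thesis by (auto simp: g_def)
  qed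
  have "(\<Sum>A\<in>Pow K. \<Sum>B\<in>Pow K. g (card ((A - B) \<union> (B - A)))) \<le> (\<Sum>A\<in>Pow K. \<Sum>B\<in>Pow K. real (hdist (w A) (w B)))"
    by (intro sum_mono gle)
  also have "\<dots> = (\<Sum>A\<in>Pow K. \<Sum>B\<in>Pow K. \<Sum>j<r. of_bool (w A ! j \<noteq> w B ! j))"
    by (simp add: hdist_sum wlen)
  also have "\<dots> = (\<Sum>A\<in>Pow K. \<Sum>j<r. \<Sum>B\<in>Pow K. of_bool (w A ! j \<noteq> w B ! j))"
    by (intro sum.cong refl sum.swap)
  also have "\<dots> = (\<Sum>j<r. \<Sum>A\<in>Pow K. \<Sum>B\<in>Pow K. of_bool (w A ! j \<noteq> w B ! j))"
    by (rule sum.swap)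
  also have "\<dots> \<le> (\<Sum>j<r. D / real q)"
  proof (intro sum_mono)
    fix j
    have cP: "card (Pow K) = 2 ^ k" by (simp add: K_def card_Pow)
    have q0: "real q > 0" unfolding q_def by (simp add: card_gt_0_iff)
    have "real q * (\<Sum>A\<in>Pow K. \<Sum>B\<in>Pow K. of_bool (w A ! j \<noteq> w B ! j)) \<le> D"
      using column_bound[of "Pow K" "\<lambda>A. w A ! j"] unfolding D_def q_def cP by (simp add: K_def)
    then show "(\<Sum>A\<in>Pow K. \<Sum>B\<in>Pow K. of_bool (w A ! j \<noteq> w B ! j)) \<le> D / real q"
      using q0 by (simp add: field_simps)
  qed
  also have "\<dots> = real r * D / real q" by simp
  finally have main: "(\<Sum>A\<in>Pow K. \<Sum>B\<in>Pow K. g (card ((A - B) \<union> (B - A)))) \<le> real r * D / real q" .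
  have "(\<Sum>s=0..k. real (k choose s) * g s) = (\<Sum>s = 1..min k (2 * t). real (2 * t + 1 - s) * real (k choose s))"
  proof -
    have "(\<Sum>s=0..k. real (k choose s) * g s) = (\<Sum>s\<in>{1..min k (2 * t)}. real (k choose s) * g s)"
      by (intro sum.mono_neutral_right) (auto simp: g_def)
    also have "\<dots> = (\<Sum>s = 1..min k (2 * t). real (2 * t + 1 - s) * real (k choose s))"
      by (intro sum.cong) (auto simp: g_def)
    finally show ?thesis .
  qed
  with main pair_count[of g k] have "2 ^ k * (\<Sum>s = 1..min k (2 * t). real (2 * t + 1 - s) * real (k choose s)) \<le> real r * D / real q"
    by (simp add: K_def)
  moreover have q0: "real q > 0" unfolding q_def by (simp add: card_gt_0_iff)
  ultimately have "real q * (2 ^ k * (\<Sum>s = 1..min k (2 * t). real (2 * t + 1 - s) * real (k choose s))) \<le> real r * D"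
    by (simp add: field_simps)
  moreover have "real (2 ^ k) ^ 2 = (4::real) ^ k" by (simp add: power2_eq_square flip: power_mult_distrib)
  ultimately show ?thesis unfolding D_def q_def by simp
qed

lemma code_exists:
  assumes "t > 0"
  shows "\<exists>C :: 'a::zero_neq_one list set. C \<subseteq> vecs (2 * t * k) \<and> card C = 2 ^ k \<and>
      (\<forall>x \<in> C. \<forall>y \<in> C. x \<noteq> y \<longrightarrow> hdist x y \<ge> 2 * t)"
proof -
  define T where "T = 2 * t"
  have T0: "T > 0" using assms T_def by simp
  define rep :: "nat set \<Rightarrow> 'a list" where "rep A = map (\<lambda>j. if j div T \<in> A then 1 else 0) [0..<T * k]" for A
  have dist: "hdist (rep A) (rep B) \<ge> T" if "A \<subseteq> {0..<k}" "B \<subseteq> {0..<k}" "A \<noteq> B" for A B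
  proof -
    have "(A - B) \<union> (B - A) \<noteq> {}" using that(3) by auto
    then obtain i where i: "i \<in> (A - B) \<union> (B - A)" by blast
    then have ik: "i < k" using that by auto
    have sub: "{i * T..<i * T + T} \<subseteq> {j. j < length (rep A) \<and> rep A ! j \<noteq> rep B ! j}"
    proof
      fix j assume j: "j \<in> {i * T..<i * T + T}"
      then have jd: "j div T = i" using T0
        by (intro div_nat_eqI) (simp_all add: algebra_simps)
      have "T * Suc i \<le> T * k" using ik by (intro mult_le_mono2) simp
      then have "i * T + T \<le> T * k" by (simp add: algebra_simps)
      then have jl: "j < T * k" using j by auto
      show "j \<in> {j. j < length (rep A) \<and> rep A ! j \<noteq> rep B ! j}"
        using jl jd i by (auto simp: rep_def)
    qed
    have "card {i * T..<i * T + T} \<le> hdist (rep A) (rep B)"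
      unfolding hdist_def by (rule card_mono[OF _ sub]) auto
    then show ?thesis by simp
  qed
  define C where "C = rep ` Pow {0..<k}"
  have inj: "inj_on rep (Pow {0..<k})"
  proof (rule inj_onI)
    fix A B assume "A \<in> Pow {0..<k}" "B \<in> Pow {0..<k}" "rep A = rep B"
    then show "A = B" using dist[of A B] T0 by (auto simp: hdist_def)
  qed
  have "C \<subseteq> vecs (2 * t * k)" by (auto simp: C_def vecs_def rep_def T_def)
  moreover have "card C = 2 ^ k" unfolding C_def using inj by (simp add: card_image card_Pow)
  moreover have "\<forall>x \<in> C. \<forall>y \<in> C. x \<noteq> y \<longrightarrow> hdist x y \<ge> 2 * t"
  proof (intro ballI impI)
    fix x y assume x: "x \<in> C" and y: "y \<in> C" and xy: "x \<noteq> y"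
    obtain A where A: "A \<subseteq> {0..<k}" "x = rep A" using x unfolding C_def by blast
    obtain B where B: "B \<subseteq> {0..<k}" "y = rep B" using y unfolding C_def by blast
    have "A \<noteq> B" using A B xy by blast
    then have "T \<le> hdist (rep A) (rep B)" using A B dist by blast
    then show "hdist x y \<ge> 2 * t" using A B T_def by simp
  qed
  ultimately show ?thesis by blast
qed

lemma encoding_from_code:
  fixes C :: "'a::zero list set"
  assumes "C \<subseteq> vecs n" "card C = 2 ^ k" "\<forall>x \<in> C. \<forall>y \<in> C. x \<noteq> y \<longrightarrow> hdist x y \<ge> 2 * t"
  shows "\<exists>p. is_encoding (support_partition k :: 'a list set set) k t n p"
proof -
  have fC: "finite C" using assms(2) by (metis card.infinite power_not_zero zero_neq_numeral)
  have "card (Pow {0..<k}) = card C" using assms(2) by (simp add: card_Pow)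
  then obtain h where h: "bij_betw h (Pow {0..<k}) C"
    using finite_same_card_bij[OF _ fC] by blast
  define p where "p u = h (supp u)" for u :: "'a list"
  have suppK: "supp u \<in> Pow {0..<k}" if "u \<in> vecs k" for u :: "'a list"
    using that by (auto simp: supp_def vecs_def)
  have "is_encoding (support_partition k :: 'a list set set) k t n p"
    unfolding is_encoding_def
  proof (intro conjI ballI impI)
    fix u :: "'a list" assume "u \<in> vecs k"
    then have "p u \<in> C" unfolding p_def by (rule bij_betw_apply[OF h suppK])
    then show "length (p u) = n" using assms(1) by (auto simp: vecs_def)
  next
    fix u v :: "'a list" assume u: "u \<in> vecs k" and v: "v \<in> vecs k"
      and nb: "\<not> (\<exists>B \<in> support_partition k. u \<in> B \<and> v \<in> B)"
    have "supp u \<noteq> supp v"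
    proof
      assume eq: "supp u = supp v"
      define X :: "'a list set" where "X = {w \<in> vecs k. supp w = supp u}"
      have X: "X \<in> support_partition k"
        using suppK[OF u] unfolding support_partition_def X_def by auto
      have "u \<in> X \<and> v \<in> X"
        using u v eq unfolding X_def by simp
      then have "\<exists>B \<in> support_partition k. u \<in> B \<and> v \<in> B" using X by blast
      with nb show False by contradiction
    qed
    then have uv: "u \<noteq> v" by (rule contrapos_nn) (rule arg_cong)
    have lu: "length u = length v" using u v unfolding vecs_def by simp
    have d1: "hdist u v \<ge> 1" by (rule hdist_pos[OF lu uv])
    have "p u \<noteq> p v" unfolding p_def
      using inj_on_contraD[OF bij_betw_imp_inj_on[OF h] \<open>supp u \<noteq> supp v\<close> suppK[OF u] suppK[OF v]] .
    moreover have "p u \<in> C" unfolding p_def by (rule bij_betw_apply[OF h suppK[OF u]])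
    moreover have "p v \<in> C" unfolding p_def by (rule bij_betw_apply[OF h suppK[OF v]])
    ultimately have d2: "hdist (p u) (p v) \<ge> 2 * t" using assms(3) by simp
    have "hdist (u @ p u) (v @ p v) = hdist u v + hdist (p u) (p v)"
      using u v by (intro hdist_append) (auto simp: vecs_def)
    then show "hdist (u @ p u) (v @ p v) \<ge> 2 * t + 1" using d1 d2 by simp
  qed
  then show ?thesis by blast
qed

lemma denom_pos:
  fixes q k :: nat
  assumes q2: "q \<ge> 2" and k: "k > 0"
  shows "real (2 ^ k mod q) * (real q - real (2 ^ k mod q)) < 4 ^ k * (real q - 1)"
proof -
  define a where "a = 2 ^ k mod q"
  have aq: "a < q" using q2 by (simp add: a_def)
  have 4: "(4::real) ^ k = real (2 ^ k) * real (2 ^ k)"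
    by (simp flip: power_mult_distrib)
  have le1: "real a * (real q - real a) \<le> real a * real q" by (intro mult_left_mono) auto
  show ?thesis
  proof (cases "2 ^ k < q")
    case True
    then have a: "a = 2 ^ k" by (simp add: a_def)
    have "real a * (real q - real a) < real a * real q"
      using a by simp
    also have "\<dots> \<le> 4 ^ k * (real q - 1)"
    proof -
      have "(2::real) ^ 1 \<le> 2 ^ k" using k by (intro power_increasing) auto
      then have "real (2 ^ k) \<ge> 2" by simp
      then have m2: "real (2 ^ k) * (real q - 1) \<ge> 2 * (real q - 1)" using q2 by (intro mult_right_mono) auto
      have "real q \<le> 2 * (real q - 1)" using q2 by simp
      then have "real q \<le> real (2 ^ k) * (real q - 1)" using m2 by (rule order_trans)
      then show ?thesis unfolding 4 a by (simp add: mult.assoc mult_left_mono)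
    qed
    finally show ?thesis by (simp add: a_def)
  next
    case False
    have "real a * (real q - real a) \<le> real a * real q" by (rule le1)
    also have "\<dots> < real q * real q" using aq q2 by (intro mult_strict_right_mono) auto
    also have "\<dots> \<le> real (2 ^ k) * real (2 ^ k)" using False by (intro mult_mono) auto
    also have "\<dots> \<le> 4 ^ k * (real q - 1)" unfolding 4 using q2 by simp
    finally show ?thesis by (simp add: a_def)
  qed
qed

theorem corollary7:
  fixes k t :: nat
  assumes "k > 0" and "t > 0"
  defines "q \<equiv> card (UNIV :: ('a::{finite,field}) set)"
  defines "a \<equiv> (2::nat) ^ k mod q"
  shows "(2 ^ k * real q) / (4 ^ k * (real q - 1) - real a * (real q - real a))
           * (\<Sum>s = 1..min k (2 * t). real (2 * t + 1 - s) * real (k choose s))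
         \<le> real (min_redundancy (support_partition k :: 'a list set set) k t)
       \<and> min_redundancy (support_partition k :: 'a list set set) k t
         \<le> min_code_length TYPE('a) (2 ^ k) (2 * t)"
proof -
  let ?P = "support_partition k :: 'a list set set"
  define N where "N = min_code_length TYPE('a) (2^k) (2*t)"
  have ex: "\<exists>n. \<exists>C::'a list set. C \<subseteq> vecs n \<and> card C = 2 ^ k \<and> (\<forall>x \<in> C. \<forall>y \<in> C. x \<noteq> y \<longrightarrow> hdist x y \<ge> 2 * t)"
    using code_exists[OF assms(2), where 'a='a, of k] by blast
  have "\<exists>C::'a list set. C \<subseteq> vecs N \<and> card C = 2 ^ k \<and> (\<forall>x \<in> C. \<forall>y \<in> C. x \<noteq> y \<longrightarrow> hdist x y \<ge> 2 * t)"
    unfolding N_def min_code_length_def by (rule LeastI_ex[OF ex])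
  then obtain C :: "'a list set" where C: "C \<subseteq> vecs N" "card C = 2 ^ k" "\<forall>x \<in> C. \<forall>y \<in> C. x \<noteq> y \<longrightarrow> hdist x y \<ge> 2 * t"
    by blast
  have encN: "\<exists>p. is_encoding ?P k t N p" using encoding_from_code[OF C] .
  have upper: "min_redundancy ?P k t \<le> N"
    unfolding min_redundancy_def using encN by (rule Least_le)
  have "\<exists>p. is_encoding ?P k t (min_redundancy ?P k t) p"
    unfolding min_redundancy_def using encN by (rule LeastI)
  then obtain p where p: "is_encoding ?P k t (min_redundancy ?P k t) p" by blast
  define r where "r = min_redundancy ?P k t"
  define S where "S = (\<Sum>s = 1..min k (2 * t). real (2 * t + 1 - s) * real (k choose s))"
  define D where "D = 4 ^ k * (real q - 1) - real a * (real q - real a)"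
  have q2: "q \<ge> 2"
  proof -
    have "card {0::'a, 1} \<le> q" unfolding q_def by (rule card_mono) auto
    then show ?thesis by simp
  qed
  have Dpos: "D > 0" unfolding D_def a_def using denom_pos[OF q2 assms(1)] by simp
  have core: "real q * (2 ^ k * S) \<le> real r * D"
    using lower_core[OF p] unfolding q_def a_def D_def S_def r_def by simp
  have "(2 ^ k * real q) / D * S = (real q * (2 ^ k * S)) / D" by simp
  also have "\<dots> \<le> real r" using core Dpos by (simp add: pos_divide_le_eq)
  finally have lower: "(2 ^ k * real q) / D * S \<le> real r" .
  show ?thesis using lower upper unfolding D_def S_def r_def N_def by simp
qed

end
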